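(* Let $d\ge2$ and let $\mathcal{O}$ be a collection of convex objects in $\mathbb{R}^d$ which is closed under rotations and translations. The following are equivalent: (1) $\mathcal{O}$ is $k_0$-fat for some $k_0\ge1$; (2) $\mathcal{O}$ is $k_1$-globally fat for some $k_1\ge1$; (3) $\mathcal{O}$ is $k_2$-thick for some $k_2\ge1$; (4) $\mathcal{O}$ is $k_3$-locally fat for some $k_3\ge2$.
   Context: An object in $\mathbb{R}^d$ is a path-connected compact set; its size is the side length of its smallest enclosing axis-aligned hypercube. $\mathrm{vol}$ denotes Lebesgue measure. A collection is $c$-fat if for every $r\in\mathbb{R}$ and every closed axis-aligned box $R$ of side length $r$ there are at most $c$ pairwise non-intersecting objects of the collection of size at least $r$ intersecting $R$. An object $O$ is $k$-locally fat if for every closed $d$-dimensional ball $B$ with center in $O$ whose boundary intersects $O$, $\mathrm{vol}(B)\le k^d\,\mathrm{vol}(O\cap B)$. It is $k$-globally fat if there are balls $B_{in}\subseteq O\subseteq B_{out}$ with radii $R_{in},R_{out}$ satisfying $R_{out}\le kR_{in}$. It is $k$-thick if $\mathrm{vol}(B_O)\le k^d\mathrm{vol}(O)$, where $B_O$ is the minimal enclosing ball of $O$. A collection is $k$-locally fat / $k$-globally fat / $k$-thick if every member is. *)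

theory Defs
  imports "HOL-Analysis.Analysis"
begin

text \<open>Ambient space: R^d rendered as real^'n, d = CARD('n).\<close>

definition is_object :: "(real^'n) set \<Rightarrow> bool" where
  "is_object X \<longleftrightarrow> X \<noteq> {} \<and> compact X \<and> path_connected X"

text \<open>Side length of the smallest enclosing axis-aligned hypercube.\<close>
definition obj_size :: "(real^'n) set \<Rightarrow> real" where
  "obj_size X = Max ((\<lambda>i. (SUP x\<in>X. x $ i) - (INF x\<in>X. x $ i)) ` UNIV)"

definition axis_cube :: "real^'n \<Rightarrow> real \<Rightarrow> (real^'n) set" where
  "axis_cube a r = cbox a (a + r *\<^sub>R One)"

definition fat_collection :: "real \<Rightarrow> (real^'n) set set \<Rightarrow> bool" where
  "fat_collection c C \<longleftrightarrow>
     (\<forall>r a S. 0 \<le> r \<longrightarrow> S \<subseteq> C \<longrightarrow> pairwise disjnt S \<longrightarrow>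
        (\<forall>X\<in>S. obj_size X \<ge> r \<and> X \<inter> axis_cube a r \<noteq> {}) \<longrightarrow>
        finite S \<and> real (card S) \<le> c)"

definition locally_fat :: "real \<Rightarrow> (real^'n) set \<Rightarrow> bool" where
  "locally_fat k X \<longleftrightarrow>
     (\<forall>c r. c \<in> X \<longrightarrow> 0 \<le> r \<longrightarrow> sphere c r \<inter> X \<noteq> {} \<longrightarrow>
        measure lebesgue (cball c r) \<le> k ^ CARD('n) * measure lebesgue (X \<inter> cball c r))"

definition globally_fat :: "real \<Rightarrow> (real^'n) set \<Rightarrow> bool" where
  "globally_fat k X \<longleftrightarrow>
     (\<exists>c1 r1 c2 r2. 0 \<le> r1 \<and> 0 \<le> r2 \<and> cball c1 r1 \<subseteq> X \<and> X \<subseteq> cball c2 r2 \<and> r2 \<le> k * r1)"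

definition min_enclosing_ball :: "(real^'n) set \<Rightarrow> real^'n \<Rightarrow> real \<Rightarrow> bool" where
  "min_enclosing_ball X c r \<longleftrightarrow> 0 \<le> r \<and> X \<subseteq> cball c r \<and>
     (\<forall>c' r'. X \<subseteq> cball c' r' \<longrightarrow> r \<le> r')"

definition thick :: "real \<Rightarrow> (real^'n) set \<Rightarrow> bool" where
  "thick k X \<longleftrightarrow>
     (\<forall>c r. min_enclosing_ball X c r \<longrightarrow>
        measure lebesgue (cball c r) \<le> k ^ CARD('n) * measure lebesgue X)"

definition rotation :: "(real^'n \<Rightarrow> real^'n) \<Rightarrow> bool" where
  "rotation f \<longleftrightarrow> orthogonal_transformation f \<and> det (matrix f) = 1"

end

theory Submission
  imports Defs
begin


definition colmat :: "('n \<Rightarrow> real^'n) \<Rightarrow> real^'n^'n" where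
  "colmat g = (\<chi> i j. g j $ i)"

lemma det_bound:
  fixes g :: "'n::finite \<Rightarrow> real^'n"
  assumes "\<And>j. norm (g j) \<le> B"
  shows "\<bar>det (colmat g)\<bar> \<le> fact CARD('n) * B ^ CARD('n)"
proof -
  have B0: "0 \<le> B" using assms[of undefined] norm_ge_zero order_trans by blast
  have "\<bar>det (colmat g)\<bar> \<le> (\<Sum>p\<in>{p. p permutes (UNIV::'n set)}. \<bar>of_int (sign p) * (\<Prod>i\<in>UNIV. colmat g $ i $ p i)\<bar>)"
    unfolding det_def by (rule sum_abs)
  also have "\<dots> \<le> (\<Sum>p\<in>{p. p permutes (UNIV::'n set)}. B ^ CARD('n))"
  proof (rule sum_mono)
    fix p assume "p \<in> {p. p permutes (UNIV::'n set)}"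
    have "\<bar>of_int (sign p) * (\<Prod>i\<in>UNIV. colmat g $ i $ p i)\<bar> = (\<Prod>i\<in>UNIV. \<bar>colmat g $ i $ p i\<bar>)"
      by (simp add: abs_mult abs_prod sign_def)
    also have "\<dots> \<le> (\<Prod>i\<in>(UNIV::'n set). B)"
      by (rule prod_mono) (auto simp: colmat_def intro: order_trans[OF component_le_norm_cart assms])
    finally show "\<bar>of_int (sign p) * (\<Prod>i\<in>UNIV. colmat g $ i $ p i)\<bar> \<le> B ^ CARD('n)" by simp
  qed
  also have "\<dots> = fact CARD('n) * B ^ CARD('n)"
    using card_permutations[of "UNIV::'n set" "CARD('n)"] by simp
  finally show ?thesis .
qed



lemma degenerate_hyperplane:
  fixes S :: "(real^'n) set"
  assumes "\<forall>g. (\<forall>j. g j \<in> S) \<longrightarrow> det (colmat g) = 0"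
  shows "\<exists>u. u \<noteq> 0 \<and> (\<forall>y\<in>S. inner u y = 0)"
proof -
  have "dim S < DIM(real^'n)"
  proof (rule ccontr)
    assume "\<not> dim S < DIM(real^'n)"
    then have dS: "dim S = CARD('n)" using dim_subset_UNIV[of S] by simp
    obtain B where B: "B \<subseteq> S" "independent B" "S \<subseteq> span B" "card B = dim S"
      by (rule basis_exists)
    have fB: "finite B" using B(2) independent_bound by blast
    obtain f where f: "bij_betw f (UNIV::'n set) B"
      using finite_same_card_bij[of "UNIV::'n set" B] fB B(4) dS by auto
    have cols: "column i (colmat f) = f i" for i
      by (simp add: column_def colmat_def vec_eq_iff)
    have "\<forall>c. sum (\<lambda>i. c i *s column i (colmat f)) (UNIV :: 'n set) = 0 \<longrightarrow> (\<forall>i. c i = 0)"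
    proof (rule allI, rule impI)
      fix c :: "'n \<Rightarrow> real"
      assume c: "sum (\<lambda>i. c i *s column i (colmat f)) (UNIV :: 'n set) = 0"
      let ?u = "\<lambda>b. c (inv_into UNIV f b)"
      have "(\<Sum>b\<in>B. ?u b *\<^sub>R b) = (\<Sum>i\<in>UNIV. ?u (f i) *\<^sub>R f i)"
        using sum.reindex_bij_betw[OF f, of "\<lambda>b. ?u b *\<^sub>R b"] by simp
      also have "\<dots> = (\<Sum>i\<in>UNIV. c i *\<^sub>R f i)"
        using f by (simp add: bij_betw_def inv_into_f_f)
      also have "\<dots> = 0" using c by (simp add: cols scalar_mult_eq_scaleR)
      finally have s0: "(\<Sum>b\<in>B. ?u b *\<^sub>R b) = 0" .
      have nex: "\<not> ((\<exists>v \<in> B. u v \<noteq> 0) \<and> (\<Sum>v\<in>B. u v *\<^sub>R v) = 0)" for u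
        using B(2) dependent_finite[OF fB] by blast
      have "\<forall>b\<in>B. ?u b = 0"
        using nex[of ?u] s0 by blast
      show "\<forall>i. c i = 0"
      proof
        fix i
        have "f i \<in> B" using f bij_betwE by blast
        then have "?u (f i) = 0" using \<open>\<forall>b\<in>B. ?u b = 0\<close> by blast
        moreover have "inv_into UNIV f (f i) = i" using f by (simp add: bij_betw_def inv_into_f_f)
        ultimately show "c i = 0" by simp
      qed
    qed
    then have "det (colmat f) \<noteq> 0"
      by (simp add: invertible_det_nz[symmetric] invertible_left_inverse matrix_left_invertible_independent_columns)
    moreover have "\<forall>j. f j \<in> S" using f B(1) bij_betwE by blast
    ultimately show False using assms by blast
  qed
  then obtain x where x: "x \<noteq> 0" "\<And>y. y \<in> span S \<Longrightarrow> orthogonal x y"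
    using orthogonal_to_subspace_exists by blast
  then show ?thesis by (meson orthogonal_def span_base)
qed



lemma conv_comb:
  fixes X :: "'a::real_vector set" and g :: "'i \<Rightarrow> 'a"
  assumes X: "convex X" "v0 \<in> X" and I: "finite I" and g: "\<forall>j\<in>I. v0 + g j \<in> X"
    and l: "\<forall>j\<in>I. 0 \<le> l j" "sum l I \<le> 1"
  shows "v0 + (\<Sum>j\<in>I. l j *\<^sub>R g j) \<in> X"
proof (cases "sum l I = 0")
  case True
  then have "\<forall>j\<in>I. l j = 0" using sum_nonneg_eq_0_iff[OF I] l(1) by blast
  then show ?thesis using X(2) by simp
next
  case False
  define t where "t = sum l I"
  have t: "0 < t" "t \<le> 1" using False l sum_nonneg[of I l] unfolding t_def by force+
  have p: "(\<Sum>j\<in>I. (l j / t) *\<^sub>R (v0 + g j)) \<in> X"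
    using convex_sum[OF I X(1), of "\<lambda>j. l j / t" "\<lambda>j. v0 + g j"] g l t
    by (simp add: sum_divide_distrib[symmetric] t_def)
  have "(\<Sum>j\<in>I. (l j / t) *\<^sub>R (v0 + g j)) = (\<Sum>j\<in>I. (l j / t)) *\<^sub>R v0 + (1/t) *\<^sub>R (\<Sum>j\<in>I. l j *\<^sub>R g j)"
    by (simp add: scaleR_add_right sum.distrib scaleR_sum_left scaleR_sum_right)
  also have "(\<Sum>j\<in>I. (l j / t)) = 1" using t by (simp add: sum_divide_distrib[symmetric] t_def)
  finally have pe: "(\<Sum>j\<in>I. (l j / t) *\<^sub>R (v0 + g j)) = v0 + (1/t) *\<^sub>R (\<Sum>j\<in>I. l j *\<^sub>R g j)" by simp
  have "(1 - t) *\<^sub>R v0 + t *\<^sub>R (v0 + (1/t) *\<^sub>R (\<Sum>j\<in>I. l j *\<^sub>R g j)) \<in> X"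
    using convexD[OF X(1) X(2) p[unfolded pe], of "1 - t" t] t by simp
  moreover have "(1 - t) *\<^sub>R v0 + t *\<^sub>R (v0 + (1/t) *\<^sub>R (\<Sum>j\<in>I. l j *\<^sub>R g j)) = v0 + (\<Sum>j\<in>I. l j *\<^sub>R g j)"
    using t by (simp add: algebra_simps)
  ultimately show ?thesis by simp
qed



lemma convex_ball_slab:
  fixes X :: "(real^'n) set"
  assumes cX: "convex X" and bX: "bounded X" and v0: "v0 \<in> X"
  shows "\<exists>u b h z. norm u = 1 \<and> 0 \<le> h \<and> (\<forall>x\<in>X. \<bar>inner u x - b\<bar> \<le> h) \<and>
           cball z (h / (4 * CARD('n))) \<subseteq> X"
proof -
  define S where "S = (\<lambda>x. x - v0) ` X"
  show ?thesis
  proof (cases "\<forall>g. (\<forall>j. g j \<in> S) \<longrightarrow> det (colmat g) = 0")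
    case True
    obtain u0 where u0: "u0 \<noteq> 0" "\<forall>y\<in>S. inner u0 y = 0"
      using degenerate_hyperplane[OF True] by blast
    define u where "u = (1 / norm u0) *\<^sub>R u0"
    have nu: "norm u = 1" using u0 by (simp add: u_def)
    have "\<forall>x\<in>X. \<bar>inner u x - inner u v0\<bar> \<le> 0"
    proof
      fix x assume "x \<in> X"
      then have "inner u0 (x - v0) = 0" using u0 by (auto simp: S_def)
      then show "\<bar>inner u x - inner u v0\<bar> \<le> 0" by (simp add: u_def inner_diff_right)
    qed
    moreover have "cball v0 (0 / (4 * CARD('n))) \<subseteq> X" using v0 by simp
    ultimately show ?thesis using nu by blast
  next
    case False
    then obtain g0 where g0: "\<forall>j. g0 j \<in> S" "det (colmat g0) \<noteq> 0" by blast
    obtain Bd where Bd: "\<forall>y\<in>S. norm y \<le> Bd"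
      using bounded_translation[OF bX, of "- v0"] unfolding S_def bounded_iff by auto
    define DS where "DS = {\<bar>det (colmat g)\<bar> | g. \<forall>j. g j \<in> S}"
    have bdd: "bdd_above DS"
      unfolding DS_def bdd_above_def using det_bound Bd by blast
    have inDS: "\<bar>det (colmat g)\<bar> \<in> DS" if "\<forall>j. g j \<in> S" for g
      using that unfolding DS_def by blast
    have DSne: "DS \<noteq> {}" using inDS[OF g0(1)] by blast
    define V where "V = Sup DS"
    have leV: "\<bar>det (colmat g)\<bar> \<le> V" if "\<forall>j. g j \<in> S" for g
      unfolding V_def using cSup_upper[OF inDS[OF that] bdd] .
    have Vpos: "0 < V" using leV[OF g0(1)] g0(2) by simp
    have "V / 2 < Sup DS" using Vpos V_def by simp
    then obtain e where "e \<in> DS" "V / 2 < e" using less_cSup_iff[OF DSne bdd] by blast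
    then obtain g where g: "\<forall>j. g j \<in> S" "V / 2 < \<bar>det (colmat g)\<bar>" unfolding DS_def by blast
    define A where "A = colmat g"
    have dA: "det A \<noteq> 0" using g Vpos A_def by auto
    then obtain N where N: "A ** N = mat 1" "N ** A = mat 1"
      using invertible_det_nz[of A] unfolding invertible_def by blast
    define lam where "lam y = N *v (y - v0)" for y
    have Alam: "A *v lam y = y - v0" for y
      by (simp add: lam_def matrix_vector_mul_assoc N(1))
    have lamA: "lam (v0 + A *v c) = c" for c
      by (simp add: lam_def matrix_vector_mul_assoc N(2))
    define w where "w j = N $ j" for j
    have lamc: "lam y $ j = inner (w j) (y - v0)" for y j
      by (simp add: lam_def w_def matrix_vector_mul_component)
    have colA: "column j A = g j" for j
      by (simp add: column_def A_def colmat_def vec_eq_iff)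
    have lamb: "\<bar>lam x $ k\<bar> \<le> 2" if x: "x \<in> X" for x k
    proof -
      define g' where "g' = g(k := x - v0)"
      have g': "\<forall>j. g' j \<in> S" using g x by (auto simp: g'_def S_def)
      have "colmat g' = (\<chi> i j. if j = k then (A *v lam x)$i else A$i$j)"
        using Alam[of x] by (simp add: colmat_def g'_def vec_eq_iff A_def)
      then have "det (colmat g') = lam x $ k * det A" by (simp add: cramer_lemma)
      then have "\<bar>lam x $ k\<bar> * \<bar>det A\<bar> \<le> V" using leV[OF g'] by (simp add: abs_mult)
      also have "\<dots> \<le> 2 * \<bar>det A\<bar>" using g A_def by simp
      finally show ?thesis using dA by simp
    qed
    obtain k where k: "\<forall>j. norm (w j) \<le> norm (w k)"
    proof -
      have "Max (range (\<lambda>j. norm (w j))) \<in> range (\<lambda>j. norm (w j))" by (rule Max_in) auto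
      then obtain k where "Max (range (\<lambda>j. norm (w j))) = norm (w k)" by blast
      moreover have "norm (w j) \<le> Max (range (\<lambda>j. norm (w j)))" for j by (rule Max_ge) auto
      ultimately have "\<forall>j. norm (w j) \<le> norm (w k)" by simp
      then show ?thesis using that by blast
    qed
    have wk: "0 < norm (w k)"
    proof (rule ccontr)
      assume "\<not> 0 < norm (w k)"
      then have "norm (w j) \<le> 0" for j using k[rule_format, of j] by linarith
      then have "\<forall>j. w j = 0" by simp
      then have "N = 0" by (simp add: vec_eq_iff w_def)
      then have "(mat 1 :: real^'n^'n) = 0" using N(2) by simp
      then have "(mat 1 :: real^'n^'n) $ k $ k = 0" by simp
      then show False by (simp add: mat_def)
    qed
    define d where "d = real CARD('n)"
    have d1: "1 \<le> d" unfolding d_def by simp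
    define \<sigma> where "\<sigma> = (\<Sum>j\<in>UNIV. norm (w j)) + norm (\<Sum>j\<in>UNIV. w j)"
    have s1: "(\<Sum>j\<in>UNIV. norm (w j)) \<le> d * norm (w k)"
      using sum_bounded_above[of UNIV "\<lambda>j. norm (w j)" "norm (w k)"] k by (simp add: d_def)
    have s2: "norm (\<Sum>j\<in>UNIV. w j) \<le> (\<Sum>j\<in>UNIV. norm (w j))" by (rule norm_sum)
    have sig_le: "\<sigma> \<le> 2 * d * norm (w k)" using s1 s2 unfolding \<sigma>_def by simp
    have mk: "norm (w k) \<le> (\<Sum>j\<in>UNIV. norm (w j))" by (rule member_le_sum) auto
    have sig_ge: "norm (w k) \<le> \<sigma>"
      unfolding \<sigma>_def using mk norm_ge_zero[of "sum w UNIV"] by linarith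
    have sigpos: "0 < \<sigma>" using sig_ge wk by linarith
    define \<rho> where "\<rho> = 1 / \<sigma>"
    have rho: "0 < \<rho>" using sigpos by (simp add: \<rho>_def)
    define c where "c = (\<chi> j. \<rho> * norm (w j))"
    define z where "z = v0 + A *v c"
    have ball: "cball z \<rho> \<subseteq> X"
    proof
      fix y assume y: "y \<in> cball z \<rho>"
      have ly: "lam y $ j = c $ j + inner (w j) (y - z)" for j
      proof -
        have "lam z $ j = c $ j" using lamA by (simp add: z_def)
        then have "inner (w j) (z - v0) = c $ j" by (simp add: lamc)
        then show ?thesis by (simp add: lamc inner_diff_right)
      qed
      have nyz: "norm (y - z) \<le> \<rho>" using y by (simp add: dist_norm norm_minus_commute)
      have nn: "0 \<le> lam y $ j" for j
      proof -
        have "\<bar>inner (w j) (y - z)\<bar> \<le> norm (w j) * norm (y - z)" by (rule Cauchy_Schwarz_ineq2)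
        also have "\<dots> \<le> norm (w j) * \<rho>" using nyz by (simp add: mult_left_mono)
        finally show ?thesis using ly[of j] by (simp add: c_def mult.commute)
      qed
      have "(\<Sum>j\<in>UNIV. lam y $ j) = (\<Sum>j\<in>UNIV. c $ j) + inner (\<Sum>j\<in>UNIV. w j) (y - z)"
        by (simp add: ly sum.distrib inner_sum_left)
      also have "\<dots> \<le> \<rho> * (\<Sum>j\<in>UNIV. norm (w j)) + norm (\<Sum>j\<in>UNIV. w j) * \<rho>"
      proof -
        have "inner (\<Sum>j\<in>UNIV. w j) (y - z) \<le> norm (\<Sum>j\<in>UNIV. w j) * norm (y - z)"
          by (rule norm_cauchy_schwarz)
        also have "\<dots> \<le> norm (\<Sum>j\<in>UNIV. w j) * \<rho>" using nyz by (simp add: mult_left_mono)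
        finally show ?thesis by (simp add: c_def sum_distrib_left)
      qed
      also have "\<dots> = \<rho> * \<sigma>" by (simp add: \<sigma>_def algebra_simps)
      also have "\<dots> = 1" using sigpos by (simp add: \<rho>_def)
      finally have sl: "(\<Sum>j\<in>UNIV. lam y $ j) \<le> 1" .
      have gX: "\<forall>j\<in>UNIV. v0 + g j \<in> X"
      proof
        fix j
        obtain x where "x \<in> X" "g j = x - v0" using g(1) unfolding S_def by blast
        then show "v0 + g j \<in> X" by simp
      qed
      have "v0 + (\<Sum>j\<in>UNIV. (lam y $ j) *\<^sub>R g j) \<in> X"
        by (rule conv_comb[OF cX v0 finite gX]) (use nn sl in auto)
      moreover have "(\<Sum>j\<in>UNIV. (lam y $ j) *\<^sub>R g j) = y - v0"
        using Alam[of y] by (simp add: matrix_mult_sum colA scalar_mult_eq_scaleR)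
      ultimately show "y \<in> X" by simp
    qed
    define u where "u = (1 / norm (w k)) *\<^sub>R w k"
    define h where "h = 2 / norm (w k)"
    have nu: "norm u = 1" using wk by (simp add: u_def)
    have h0: "0 \<le> h" using wk by (simp add: h_def)
    have slab: "\<forall>x\<in>X. \<bar>inner u x - inner u v0\<bar> \<le> h"
    proof
      fix x assume x: "x \<in> X"
      have "inner u x - inner u v0 = lam x $ k / norm (w k)"
        by (simp add: u_def lamc inner_diff_right diff_divide_distrib)
      then have "\<bar>inner u x - inner u v0\<bar> = \<bar>lam x $ k\<bar> / norm (w k)" by simp
      also have "\<dots> \<le> 2 / norm (w k)" using lamb[OF x] wk by (simp add: divide_right_mono)
      finally show "\<bar>inner u x - inner u v0\<bar> \<le> h" by (simp add: h_def)
    qed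
    have "h / (4 * CARD('n)) \<le> \<rho>"
    proof -
      have "h / (4 * CARD('n)) = 1 / (2 * d * norm (w k))" using wk unfolding h_def d_def
        by (simp add: field_simps)
      also have "\<dots> \<le> 1 / \<sigma>" using frac_le[of 1 1 \<sigma> "2 * d * norm (w k)"] sig_le sigpos by linarith
      finally show ?thesis by (simp add: \<rho>_def)
    qed
    then have "cball z (h / (4 * CARD('n))) \<subseteq> X" using subset_trans[OF subset_cball ball] by blast
    then show ?thesis using nu h0 slab by blast
  qed
qed



lemma bdd_comp:
  fixes X :: "(real^'n) set"
  assumes "bounded X"
  shows "bdd_above ((\<lambda>x. x $ i) ` X)" "bdd_below ((\<lambda>x. x $ i) ` X)"
proof -
  obtain B where B: "\<forall>x\<in>X. norm x \<le> B" using assms bounded_iff by blast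
  have *: "\<forall>x\<in>X. \<bar>x $ i\<bar> \<le> B" using B component_le_norm_cart order_trans by blast
  show "bdd_above ((\<lambda>x. x $ i) ` X)" by (rule bdd_aboveI2[of _ _ B]) (use * in \<open>auto simp: abs_le_iff\<close>)
  show "bdd_below ((\<lambda>x. x $ i) ` X)" by (rule bdd_belowI2[of _ "-B"]) (use * in \<open>auto simp: abs_le_iff\<close>)
qed

lemma obj_size_translate:
  fixes X :: "(real^'n) set"
  assumes "bounded X" "X \<noteq> {}"
  shows "obj_size ((\<lambda>x. x + v) ` X) = obj_size X"
proof -
  have "(SUP y\<in>(\<lambda>x. x + v) ` X. y $ i) - (INF y\<in>(\<lambda>x. x + v) ` X. y $ i)
        = (SUP x\<in>X. x $ i) - (INF x\<in>X. x $ i)" for i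
  proof -
    have "(SUP y\<in>(\<lambda>x. x + v) ` X. y $ i) = (SUP x\<in>X. v $ i + x $ i)"
      by (simp add: image_image add.commute)
    also have "\<dots> = v $ i + (SUP x\<in>X. x $ i)" by (rule Sup_add_eq[OF bdd_comp(1)[OF assms(1)] assms(2)])
    finally have 1: "(SUP y\<in>(\<lambda>x. x + v) ` X. y $ i) = v $ i + (SUP x\<in>X. x $ i)" .
    have "(INF y\<in>(\<lambda>x. x + v) ` X. y $ i) = (INF x\<in>X. v $ i + x $ i)"
      by (simp add: image_image add.commute)
    also have "\<dots> = v $ i + (INF x\<in>X. x $ i)" by (rule Inf_add_eq[OF bdd_comp(2)[OF assms(1)] assms(2)])
    finally have 2: "(INF y\<in>(\<lambda>x. x + v) ` X. y $ i) = v $ i + (INF x\<in>X. x $ i)" .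
    show ?thesis using 1 2 by simp
  qed
  then show ?thesis unfolding obj_size_def by simp
qed

lemma comp_diff_le_size:
  fixes X :: "(real^'n) set"
  assumes "bounded X" "x \<in> X" "y \<in> X"
  shows "x $ i - y $ i \<le> obj_size X"
proof -
  have "x $ i \<le> (SUP x\<in>X. x $ i)" by (rule cSUP_upper[OF assms(2) bdd_comp(1)[OF assms(1)]])
  moreover have "(INF x\<in>X. x $ i) \<le> y $ i" by (rule cINF_lower[OF bdd_comp(2)[OF assms(1)] assms(3)])
  moreover have "(SUP x\<in>X. x $ i) - (INF x\<in>X. x $ i) \<le> obj_size X"
    unfolding obj_size_def by (rule Max_ge) auto
  ultimately show ?thesis by linarith
qed

lemma norm_diff_le_size:
  fixes X :: "(real^'n) set"
  assumes "bounded X" "x \<in> X" "y \<in> X"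
  shows "norm (x - y) \<le> CARD('n) * obj_size X"
proof -
  have "norm (x - y) \<le> (\<Sum>i\<in>UNIV. \<bar>(x - y) $ i\<bar>)" by (rule norm_le_l1_cart)
  also have "\<dots> \<le> (\<Sum>i\<in>(UNIV::'n set). obj_size X)"
  proof (rule sum_mono)
    fix i
    show "\<bar>(x - y) $ i\<bar> \<le> obj_size X"
      using comp_diff_le_size[OF assms, of i] comp_diff_le_size[OF assms(1,3,2), of i] by simp
  qed
  finally show ?thesis by simp
qed

lemma obj_size_nonneg:
  fixes X :: "(real^'n) set"
  assumes "bounded X" "X \<noteq> {}"
  shows "0 \<le> obj_size X"
  using comp_diff_le_size[OF assms(1)] assms(2) by fastforce

lemma rotation_id: "rotation (\<lambda>x::real^'n. x)"
proof -
  have "(\<lambda>x::real^'n. x) = id" by (simp add: id_def)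
  then show ?thesis unfolding rotation_def
    by (metis orthogonal_transformation_id matrix_id_mat_1 det_I)
qed



lemma One_cart [simp]: "(One::real^'n) $ i = 1"
  by (metis one_index Cart_1)

lemma segment_in_cube:
  fixes p u :: "real^'n"
  assumes "norm u = 1" "0 \<le> s" "0 \<le> t" "t \<le> s"
  shows "p + t *\<^sub>R u \<in> axis_cube (\<chi> i. p $ i + min 0 (s * u $ i)) s"
proof -
  have "(\<chi> i. p $ i + min 0 (s * u $ i)) $ i \<le> (p + t *\<^sub>R u) $ i \<and>
        (p + t *\<^sub>R u) $ i \<le> ((\<chi> i. p $ i + min 0 (s * u $ i)) + s *\<^sub>R One) $ i" for i
  proof -
    have ui: "\<bar>u $ i\<bar> \<le> 1" using component_le_norm_cart[of u i] assms(1) by simp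
    have e1: "((\<chi> i. p $ i + min 0 (s * u $ i)) + s *\<^sub>R One) $ i = p $ i + min 0 (s * u $ i) + s"
      by (simp only: vector_add_component vector_scaleR_component One_cart vec_lambda_beta) simp
    have e2: "(\<chi> i. p $ i + min 0 (s * u $ i)) $ i = p $ i + min 0 (s * u $ i)" by simp
    have e3: "(p + t *\<^sub>R u) $ i = p $ i + t * u $ i" by simp
    show ?thesis
    proof (cases "0 \<le> u $ i")
      case True
      have "t * u $ i \<le> s * u $ i" using assms True by (simp add: mult_right_mono)
      moreover have "s * u $ i \<le> s" using assms ui True mult_left_mono[of "u $ i" 1 s] by simp
      moreover have "0 \<le> t * u $ i" using assms True by simp
      moreover have "min 0 (s * u $ i) = 0" using assms True by simp
      ultimately show ?thesis unfolding e1 e2 e3 by linarith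
    next
      case False
      have "s * u $ i \<le> t * u $ i" using assms False by (simp add: mult_right_mono_neg)
      moreover have "- s \<le> s * u $ i" using assms ui False mult_left_mono[of "- u $ i" 1 s] by simp
      moreover have "t * u $ i \<le> 0" using assms False by (simp add: mult_nonneg_nonpos)
      moreover have "min 0 (s * u $ i) = s * u $ i" using assms False by (simp add: mult_nonneg_nonpos)
      ultimately show ?thesis unfolding e1 e2 e3 by linarith
    qed
  qed
  then show ?thesis unfolding axis_cube_def mem_box_cart by blast
qed

lemma stacking:
  fixes C :: "(real^'n) set set" and m :: nat and h :: real
  assumes fat: "fat_collection k0 C" and m: "1 \<le> m" "k0 < real m + 1"
    and tr: "\<forall>X\<in>C. \<forall>f a. rotation f \<longrightarrow> (\<lambda>x. f x + a) ` X \<in> C"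
    and X: "X \<in> C" "X \<noteq> {}" "bounded X"
    and u: "norm u = 1" "\<forall>x\<in>X. \<bar>inner u x - b\<bar> \<le> h"
  shows "obj_size X \<le> 2 * real m * h"
proof (rule ccontr)
  assume "\<not> obj_size X \<le> 2 * real m * h"
  then have big: "2 * real m * h < obj_size X" by simp
  define s where "s = obj_size X"
  obtain p where p: "p \<in> X" using X(2) by blast
  have h0: "0 \<le> h" using u(2) p by force
  have "0 \<le> 2 * real m * h" using h0 by simp
  then have s0: "0 \<le> s" using big unfolding s_def by linarith
  define \<delta> where "\<delta> = s / m"
  have d2h: "2 * h < \<delta>" using big m by (simp add: \<delta>_def s_def field_simps)
  have d0: "0 < \<delta>" using d2h h0 by linarith
  define T where "T j = (\<lambda>x. x + (real j * \<delta>) *\<^sub>R u) ` X" for j :: nat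
  define S where "S = T ` {0..m}"
  define a where "a = (\<chi> i. p $ i + min 0 (s * u $ i))"
  have TC: "T j \<in> C" for j
    using tr X(1) rotation_id unfolding T_def by blast
  have Tdisj: "T i \<inter> T j = {}" if "i < j" for i j
  proof (rule ccontr)
    assume "T i \<inter> T j \<noteq> {}"
    then obtain x y where xy: "x \<in> X" "y \<in> X" "x + (real i * \<delta>) *\<^sub>R u = y + (real j * \<delta>) *\<^sub>R u"
      unfolding T_def by blast
    have "inner u (x + (real i * \<delta>) *\<^sub>R u) = inner u (y + (real j * \<delta>) *\<^sub>R u)" using xy(3) by simp
    then have "inner u x - inner u y = (real j - real i) * \<delta>"
      using u(1) by (simp add: inner_add_right algebra_simps dot_square_norm power2_eq_square)
    moreover have "\<delta> \<le> (real j - real i) * \<delta>" using that d0 by simp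
    moreover have "\<bar>inner u x - inner u y\<bar> \<le> 2 * h"
    proof -
      have "\<bar>inner u x - b\<bar> \<le> h" "\<bar>inner u y - b\<bar> \<le> h" using u(2) xy(1,2) by auto
      then show ?thesis by linarith
    qed
    ultimately show False using d2h by linarith
  qed
  have injT: "inj_on T {0..m}"
  proof (rule inj_onI)
    fix i j assume "i \<in> {0..m}" "j \<in> {0..m}" "T i = T j"
    moreover have "T i \<noteq> {}" using X(2) by (simp add: T_def)
    ultimately show "i = j" using Tdisj by (metis Int_absorb linorder_neqE_nat)
  qed
  have cardS: "card S = m + 1" using card_image[OF injT] by (simp add: S_def)
  have "finite S \<and> real (card S) \<le> k0"
  proof (rule fat[unfolded fat_collection_def, rule_format, of s S a])
    show "0 \<le> s" by (rule s0)
    show "S \<subseteq> C" using TC by (auto simp: S_def)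
    show "pairwise disjnt S"
    proof (unfold pairwise_def, intro ballI impI)
      fix Y Z assume "Y \<in> S" "Z \<in> S" "Y \<noteq> Z"
      then obtain i j where "Y = T i" "Z = T j" "i \<noteq> j" unfolding S_def by blast
      then show "disjnt Y Z" unfolding disjnt_def
        using Tdisj[of i j] Tdisj[of j i] by (cases "i < j") (auto simp: Int_commute)
    qed
    show "s \<le> obj_size Y \<and> Y \<inter> axis_cube a s \<noteq> {}" if "Y \<in> S" for Y
    proof -
      from that obtain j where j: "j \<in> {0..m}" "Y = T j" by (auto simp: S_def)
      have "obj_size Y = s" using obj_size_translate[OF X(3) X(2)] by (simp add: j T_def s_def)
      moreover have "p + (real j * \<delta>) *\<^sub>R u \<in> Y" using p j by (auto simp: T_def)
      moreover have "p + (real j * \<delta>) *\<^sub>R u \<in> axis_cube a s"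
      proof -
        have "real j * \<delta> \<le> s" using j m s0 by (simp add: \<delta>_def field_simps mult_left_mono)
        then show ?thesis unfolding a_def using segment_in_cube[OF u(1) s0, of "real j * \<delta>" p] d0 by simp
      qed
      ultimately show "s \<le> obj_size Y \<and> Y \<inter> axis_cube a s \<noteq> {}" by blast
    qed
  qed
  then show False using cardS m by simp
qed



lemma fat_imp_gfat:
  fixes C :: "(real^'n) set set"
  assumes fat: "fat_collection k0 C"
    and obj: "\<forall>X\<in>C. is_object X \<and> convex X"
    and tr: "\<forall>X\<in>C. \<forall>f a. rotation f \<longrightarrow> (\<lambda>x. f x + a) ` X \<in> C"
  shows "\<exists>k1\<ge>1. \<forall>X\<in>C. globally_fat k1 X"
proof -
  define m where "m = nat \<lceil>k0\<rceil> + 1"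
  have m1: "1 \<le> m" by (simp add: m_def)
  have mk: "k0 < real m + 1" unfolding m_def by linarith
  define d where "d = real CARD('n)"
  have d1: "1 \<le> d" by (simp add: d_def)
  define K where "K = 8 * d^2 * real m"
  have K1: "1 \<le> K"
  proof -
    have "1 \<le> d^2" using d1 by (simp add: one_le_power)
    moreover have "1 \<le> real m" using m1 by simp
    ultimately have "1 \<le> d^2 * real m" using mult_mono[of 1 "d^2" 1 "real m"] by simp
    then show ?thesis by (simp add: K_def)
  qed
  have "globally_fat K X" if X: "X \<in> C" for X
  proof -
    have Xo: "X \<noteq> {}" "compact X" "convex X" using obj X unfolding is_object_def by auto
    then have bX: "bounded X" by (simp add: compact_imp_bounded)
    obtain v0 where v0: "v0 \<in> X" using Xo by blast
    obtain u b h z where uh: "norm u = 1" "0 \<le> h" "\<forall>x\<in>X. \<bar>inner u x - b\<bar> \<le> h"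
        "cball z (h / (4 * CARD('n))) \<subseteq> X"
      using convex_ball_slab[OF Xo(3) bX v0] by blast
    have s: "obj_size X \<le> 2 * real m * h"
      by (rule stacking[OF fat m1 mk tr X Xo(1) bX uh(1,3)])
    have s0: "0 \<le> obj_size X" by (rule obj_size_nonneg[OF bX Xo(1)])
    have sub: "X \<subseteq> cball v0 (d * obj_size X)"
    proof
      fix x assume "x \<in> X"
      then show "x \<in> cball v0 (d * obj_size X)"
        using norm_diff_le_size[OF bX v0, of x] by (simp add: dist_norm d_def)
    qed
    have "d * obj_size X \<le> K * (h / (4 * CARD('n)))"
    proof -
      have "d * obj_size X \<le> d * (2 * real m * h)" using s d1 by (simp add: mult_left_mono)
      also have "\<dots> = K * (h / (4 * CARD('n)))" using d1 by (simp add: K_def d_def power2_eq_square field_simps)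
      finally show ?thesis .
    qed
    moreover have "0 \<le> h / (4 * CARD('n))" using uh(2) by simp
    moreover have "0 \<le> d * obj_size X" using s0 d1 by simp
    ultimately show ?thesis unfolding globally_fat_def using uh(4) sub by blast
  qed
  then show ?thesis using K1 by blast
qed



lemma measure_cball_cart:
  fixes c :: "real^'n"
  assumes "0 \<le> r"
  shows "measure lebesgue (cball c r) = unit_ball_vol (real CARD('n)) * r ^ CARD('n)"
proof -
  have "measure lebesgue (cball c r) = measure lborel (cball c r)"
    by (simp add: measure_completion)
  also have "\<dots> = unit_ball_vol (real CARD('n)) * r ^ CARD('n)"
    using content_cball[where c=c and r=r] assms by simp
  finally show ?thesis .
qed

lemma gfat_imp_thick:
  fixes X :: "(real^'n) set"
  assumes "globally_fat k X" "compact X" "0 \<le> k"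
  shows "thick k X"
  unfolding thick_def
proof (intro allI impI)
  fix c r assume mb: "min_enclosing_ball X c r"
  obtain c1 r1 c2 r2 where g: "0 \<le> r1" "0 \<le> r2" "cball c1 r1 \<subseteq> X" "X \<subseteq> cball c2 r2" "r2 \<le> k * r1"
    using assms(1) unfolding globally_fat_def by blast
  have r0: "0 \<le> r" "r \<le> r2" using mb g(4) unfolding min_enclosing_ball_def by auto
  define \<omega> where "\<omega> = unit_ball_vol (real CARD('n))"
  have w0: "0 \<le> \<omega>" unfolding \<omega>_def using unit_ball_vol_pos[of "real CARD('n)"] by simp
  have "measure lebesgue (cball c r) = \<omega> * r ^ CARD('n)" unfolding \<omega>_def by (rule measure_cball_cart[OF r0(1)])
  also have "\<dots> \<le> \<omega> * (k * r1) ^ CARD('n)"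
    using r0 g(5) w0 by (intro mult_left_mono power_mono) auto
  also have "\<dots> = k ^ CARD('n) * measure lebesgue (cball c1 r1)"
    unfolding measure_cball_cart[OF g(1)] \<omega>_def by (simp add: power_mult_distrib)
  also have "\<dots> \<le> k ^ CARD('n) * measure lebesgue X"
  proof (rule mult_left_mono)
    show "measure lebesgue (cball c1 r1) \<le> measure lebesgue X"
      by (rule measure_mono_fmeasurable[OF g(3)]) (auto simp: lmeasurable_compact assms(2))
    show "0 \<le> k ^ CARD('n)" using assms(3) by simp
  qed
  finally show "measure lebesgue (cball c r) \<le> k ^ CARD('n) * measure lebesgue X" .
qed

lemma lfat_imp_thick:
  fixes X :: "(real^'n) set"
  assumes "locally_fat k X" "compact X" "X \<noteq> {}"
  shows "thick k X"
  unfolding thick_def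
proof (intro allI impI)
  fix c r assume mb: "min_enclosing_ball X c r"
  obtain c0 where c0: "c0 \<in> X" using assms(3) by blast
  obtain x1 where x1: "x1 \<in> X" "\<forall>y\<in>X. dist c0 y \<le> dist c0 x1"
    using distance_attains_sup[OF assms(2,3), of c0] by blast
  define \<rho> where "\<rho> = dist c0 x1"
  have sub: "X \<subseteq> cball c0 \<rho>" using x1 by (auto simp: \<rho>_def)
  have r0: "0 \<le> r" "r \<le> \<rho>" using mb sub unfolding min_enclosing_ball_def by auto
  have sph: "sphere c0 \<rho> \<inter> X \<noteq> {}" using x1 by (auto simp: \<rho>_def)
  define \<omega> where "\<omega> = unit_ball_vol (real CARD('n))"
  have w0: "0 \<le> \<omega>" unfolding \<omega>_def using unit_ball_vol_pos[of "real CARD('n)"] by simp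
  have "measure lebesgue (cball c r) = \<omega> * r ^ CARD('n)" unfolding \<omega>_def by (rule measure_cball_cart[OF r0(1)])
  also have "\<dots> \<le> \<omega> * \<rho> ^ CARD('n)"
    using r0 w0 by (intro mult_left_mono power_mono) auto
  also have "\<dots> = measure lebesgue (cball c0 \<rho>)" unfolding \<omega>_def by (rule measure_cball_cart[symmetric]) (simp add: \<rho>_def)
  also have "\<dots> \<le> k ^ CARD('n) * measure lebesgue (X \<inter> cball c0 \<rho>)"
    using assms(1) c0 sph unfolding locally_fat_def by (simp add: \<rho>_def)
  also have "X \<inter> cball c0 \<rho> = X" using sub by blast
  finally show "measure lebesgue (cball c r) \<le> k ^ CARD('n) * measure lebesgue X" .
qed



lemma min_ball_exists:
  fixes X :: "(real^'n) set"
  assumes cX: "compact X" and ne: "X \<noteq> {}"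
  shows "\<exists>c r. min_enclosing_ball X c r"
proof -
  define F where "F c = (SUP x\<in>X. dist c x)" for c
  obtain B where B: "\<forall>x\<in>X. norm x \<le> B" using compact_imp_bounded[OF cX] bounded_iff by blast
  have bdd: "bdd_above ((\<lambda>x. dist c x) ` X)" for c
  proof (rule bdd_aboveI2[of _ _ "norm c + B"])
    fix x assume "x \<in> X"
    then have "norm x \<le> B" using B by blast
    then show "dist c x \<le> norm c + B" using norm_triangle_ineq4[of c x] by (simp add: dist_norm)
  qed
  have Fub: "dist c x \<le> F c" if "x \<in> X" for c x
    unfolding F_def by (rule cSUP_upper[OF that bdd])
  have Flub: "F c \<le> r" if "\<forall>x\<in>X. dist c x \<le> r" for c r
    unfolding F_def using that ne by (simp add: cSUP_least)
  have Flip: "F c \<le> F c' + dist c c'" for c c'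
  proof (rule Flub, rule ballI)
    fix x assume "x \<in> X"
    then have "dist c' x \<le> F c'" by (rule Fub)
    moreover have "dist c x \<le> dist c c' + dist c' x" by (rule dist_triangle)
    ultimately show "dist c x \<le> F c' + dist c c'" by linarith
  qed
  have "1-lipschitz_on UNIV F"
  proof (rule lipschitz_onI)
    fix c c' :: "real^'n"
    show "dist (F c) (F c') \<le> 1 * dist c c'"
      using Flip[of c c'] Flip[of c' c] by (simp add: dist_real_def dist_commute abs_le_iff)
  qed simp
  then have contF: "continuous_on UNIV F" by (rule lipschitz_on_continuous_on)
  obtain x0 where x0: "x0 \<in> X" using ne by blast
  define K where "K = cball x0 (F x0)"
  have x0K: "x0 \<in> K" using Fub[OF x0, of x0] by (simp add: K_def)
  have "continuous_on K F" using contF continuous_on_subset by blast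
  then have "\<exists>x\<in>K. \<forall>y\<in>K. F x \<le> F y"
    using continuous_attains_inf[of K F] x0K by (auto simp: K_def)
  then obtain cs where cs: "cs \<in> K" "\<forall>y\<in>K. F cs \<le> F y" by blast
  have "min_enclosing_ball X cs (F cs)"
    unfolding min_enclosing_ball_def
  proof (intro conjI allI impI)
    show "0 \<le> F cs" using Fub[OF x0, of cs] zero_le_dist[of cs x0] by linarith
    show "X \<subseteq> cball cs (F cs)" using Fub by auto
    fix c' r' assume sub: "X \<subseteq> cball c' r'"
    have "F c' \<le> r'" using sub by (intro Flub) auto
    moreover have "F cs \<le> F c'"
    proof (cases "c' \<in> K")
      case True then show ?thesis using cs by blast
    next
      case False
      then have "F x0 < dist x0 c'" by (simp add: K_def)
      moreover have "dist c' x0 \<le> F c'" by (rule Fub[OF x0])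
      moreover have "F cs \<le> F x0" using cs x0K by blast
      ultimately show ?thesis by (simp add: dist_commute)
    qed
    ultimately show "F cs \<le> r'" by linarith
  qed
  then show ?thesis by blast
qed

lemma thick_imp_lfat:
  fixes X :: "(real^'n) set"
  assumes th: "thick k X" and cX: "compact X" and ne: "X \<noteq> {}" and cv: "convex X" and k0: "0 \<le> k"
  shows "locally_fat (2 * k) X"
  unfolding locally_fat_def
proof (intro allI impI)
  fix c0 r assume c0: "c0 \<in> X" and r0: "0 \<le> r" and sph: "sphere c0 r \<inter> X \<noteq> {}"
  obtain c R where mb: "min_enclosing_ball X c R" using min_ball_exists[OF cX ne] by blast
  have R0: "0 \<le> R" and subR: "X \<subseteq> cball c R" using mb unfolding min_enclosing_ball_def by auto
  define \<omega> where "\<omega> = unit_ball_vol (real CARD('n))"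
  have w0: "0 \<le> \<omega>" unfolding \<omega>_def using unit_ball_vol_pos[of "real CARD('n)"] by simp
  define mX where "mX = measure lebesgue X"
  have thk: "\<omega> * R ^ CARD('n) \<le> k ^ CARD('n) * mX"
  proof -
    have "measure lebesgue (cball c R) \<le> k ^ CARD('n) * mX"
      using th mb unfolding thick_def mX_def by blast
    then show ?thesis unfolding measure_cball_cart[OF R0] \<omega>_def .
  qed
  have diam: "dist c0 x \<le> 2 * R" if "x \<in> X" for x
  proof -
    have "dist c0 x \<le> dist c0 c + dist c x" by (rule dist_triangle)
    moreover have "dist c0 c \<le> R" using subR c0 by (auto simp: dist_commute)
    moreover have "dist c x \<le> R" using subR that by auto
    ultimately show ?thesis by linarith
  qed
  obtain x1 where x1: "x1 \<in> X" "dist c0 x1 = r" using sph by (auto simp: sphere_def)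
  have r2R: "r \<le> 2 * R" using diam[OF x1(1)] x1(2) by simp
  have mpos: "0 \<le> measure lebesgue (X \<inter> cball c0 r)" by simp
  have kpos: "0 \<le> (2 * k) ^ CARD('n)" using k0 by simp
  show "measure lebesgue (cball c0 r) \<le> (2 * k) ^ CARD('n) * measure lebesgue (X \<inter> cball c0 r)"
  proof (cases "R = 0")
    case True
    then have "r = 0" using r0 r2R by simp
    then have m0: "measure lebesgue (cball c0 r) = 0"
      using measure_cball_cart[of r c0] by simp
    show ?thesis by (subst m0) (rule mult_nonneg_nonneg[OF kpos mpos])
  next
    case False
    then have Rp: "0 < R" using R0 by simp
    define t where "t = r / (2 * R)"
    have t0: "0 \<le> t" "t \<le> 1" using r0 r2R Rp by (auto simp: t_def)
    define H where "H = (\<lambda>x. t *\<^sub>R x + (1 - t) *\<^sub>R c0) ` X"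
    have mH: "measure lebesgue H = t ^ CARD('n) * mX"
      using measure_lebesgue_affine[of t "(1 - t) *\<^sub>R c0" X] t0 by (simp add: H_def mX_def)
    have HX: "H \<subseteq> X \<inter> cball c0 r"
    proof
      fix y assume "y \<in> H"
      then obtain x where x: "x \<in> X" "y = t *\<^sub>R x + (1 - t) *\<^sub>R c0" by (auto simp: H_def)
      have "y \<in> X" using convexD[OF cv x(1) c0, of t "1 - t"] t0 x(2) by simp
      moreover have "dist c0 y = t * dist c0 x"
      proof -
        have "c0 - y = t *\<^sub>R (c0 - x)" by (simp add: x(2) algebra_simps)
        then show ?thesis using t0 by (simp add: dist_norm norm_minus_commute)
      qed
      moreover have "t * dist c0 x \<le> t * (2 * R)" using diam[OF x(1)] t0 by (simp add: mult_left_mono)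
      moreover have "t * (2 * R) = r" using Rp by (simp add: t_def)
      ultimately show "y \<in> X \<inter> cball c0 r" by simp
    qed
    have Hc: "compact H" unfolding H_def
      by (rule compact_continuous_image[OF _ cX]) (intro continuous_intros)
    have "measure lebesgue H \<le> measure lebesgue (X \<inter> cball c0 r)"
      by (rule measure_mono_fmeasurable[OF HX])
         (auto simp: lmeasurable_compact Hc cX compact_Int_closed fmeasurable.Int
               intro: fmeasurableD lmeasurable_compact[OF Hc])
    then have mH2: "t ^ CARD('n) * mX \<le> measure lebesgue (X \<inter> cball c0 r)" using mH by simp
    have "measure lebesgue (cball c0 r) = \<omega> * (t * (2 * R)) ^ CARD('n)"
      using Rp measure_cball_cart[OF r0, of c0] by (simp add: t_def \<omega>_def)
    also have "\<dots> = (t * 2) ^ CARD('n) * (\<omega> * R ^ CARD('n))" by (simp add: power_mult_distrib)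
    also have "\<dots> \<le> (t * 2) ^ CARD('n) * (k ^ CARD('n) * mX)"
      using thk t0 by (intro mult_left_mono) auto
    also have "\<dots> = (2 * k) ^ CARD('n) * (t ^ CARD('n) * mX)" by (simp add: power_mult_distrib)
    also have "\<dots> \<le> (2 * k) ^ CARD('n) * measure lebesgue (X \<inter> cball c0 r)"
      using mH2 kpos by (intro mult_left_mono) auto
    finally show ?thesis .
  qed
qed



lemma axis_cube_mem:
  fixes a p :: "real^'n"
  shows "p \<in> axis_cube a r \<longleftrightarrow> (\<forall>i. a $ i \<le> p $ i \<and> p $ i \<le> a $ i + r)"
proof -
  have e: "(a + r *\<^sub>R One) $ i = a $ i + r" for i
    by (simp only: vector_add_component vector_scaleR_component One_cart) simp
  show ?thesis unfolding axis_cube_def mem_box_cart e by (rule refl)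
qed

lemma size_witness:
  fixes X :: "(real^'n) set"
  assumes cX: "compact X" and ne: "X \<noteq> {}" and r: "r \<le> obj_size X"
  shows "\<exists>x\<in>X. \<exists>y\<in>X. r \<le> norm (x - y)"
proof -
  have "obj_size X \<in> range (\<lambda>i. (SUP x\<in>X. x $ i) - (INF x\<in>X. x $ i))"
    unfolding obj_size_def by (rule Max_in) auto
  then obtain i where i: "obj_size X = (SUP x\<in>X. x $ i) - (INF x\<in>X. x $ i)" by auto
  have ci: "compact ((\<lambda>x. x $ i) ` X)"
    by (rule compact_continuous_image[OF _ cX]) (intro continuous_intros)
  obtain s where s: "s \<in> (\<lambda>x. x $ i) ` X" "\<forall>t\<in>(\<lambda>x. x $ i) ` X. t \<le> s"
    using compact_attains_sup[OF ci] ne by blast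
  obtain s' where s': "s' \<in> (\<lambda>x. x $ i) ` X" "\<forall>t\<in>(\<lambda>x. x $ i) ` X. s' \<le> t"
    using compact_attains_inf[OF ci] ne by blast
  obtain x where x: "x \<in> X" "s = x $ i" using s(1) by blast
  obtain y where y: "y \<in> X" "s' = y $ i" using s'(1) by blast
  have "(SUP x\<in>X. x $ i) \<le> s" using s(2) ne by (intro cSUP_least) auto
  moreover have "s' \<le> (INF x\<in>X. x $ i)" using s'(2) ne by (intro cINF_greatest) auto
  ultimately have "r \<le> x $ i - y $ i" using r i x y by linarith
  also have "\<dots> \<le> \<bar>(x - y) $ i\<bar>" by simp
  also have "\<dots> \<le> norm (x - y)" by (rule component_le_norm_cart)
  finally show ?thesis using x y by blast
qed

lemma sphere_point:
  fixes X :: "(real^'n) set"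
  assumes "connected X" "p \<in> X" "q \<in> X" "0 \<le> \<rho>" "\<rho> \<le> dist p q"
  shows "sphere p \<rho> \<inter> X \<noteq> {}"
proof -
  have "connected ((\<lambda>z. dist p z) ` X)"
    by (rule connected_continuous_image[OF _ assms(1)]) (intro continuous_intros)
  then have iv: "is_interval ((\<lambda>z. dist p z) ` X)" by (simp add: is_interval_connected_1)
  have "0 \<in> (\<lambda>z. dist p z) ` X" using assms(2) by force
  moreover have "dist p q \<in> (\<lambda>z. dist p z) ` X" using assms(3) by blast
  ultimately have "\<rho> \<in> (\<lambda>z. dist p z) ` X" using iv assms(4,5) unfolding is_interval_1 by blast
  then show ?thesis by auto
qed

lemma lfat_imp_fat:
  fixes C :: "(real^'n) set set"
  assumes obj: "\<forall>X\<in>C. is_object X" and lf: "\<forall>X\<in>C. locally_fat k X" and k1: "1 \<le> k"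
  shows "\<exists>k0\<ge>1. fat_collection k0 C"
proof -
  define d where "d = real CARD('n)"
  have d1: "1 \<le> d" by (simp add: d_def)
  define c where "c = (4 * d * k) ^ CARD('n)"
  have c1: "1 \<le> c" unfolding c_def
  proof (rule one_le_power)
    have "1 \<le> d * k" using d1 k1 mult_mono[of 1 d 1 k] by simp
    then show "1 \<le> 4 * d * k" by simp
  qed
  define \<omega> where "\<omega> = unit_ball_vol (real CARD('n))"
  have w0: "0 < \<omega>" unfolding \<omega>_def by simp
  have "fat_collection c C"
    unfolding fat_collection_def
  proof (intro allI impI)
    fix r a S
    assume r0: "0 \<le> r" and SC: "S \<subseteq> C" and pd: "pairwise disjnt S"
      and big: "\<forall>X\<in>S. r \<le> obj_size X \<and> X \<inter> axis_cube a r \<noteq> {}"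
    show "finite S \<and> real (card S) \<le> c"
    proof (cases "r = 0")
      case True
      then have "axis_cube a r = {a}" by (simp add: axis_cube_def)
      then have aX: "\<forall>X\<in>S. a \<in> X" using big by auto
      have same: "\<forall>X\<in>S. \<forall>Y\<in>S. X = Y"
        using pd aX unfolding pairwise_def disjnt_def by blast
      have fS: "finite S"
      proof (cases "S = {}")
        case False
        then obtain X0 where "X0 \<in> S" by blast
        then have "S \<subseteq> {X0}" using same by blast
        then show ?thesis using finite_subset by blast
      qed simp
      then have "card S \<le> 1" using same card_le_Suc0_iff_eq[OF fS] by simp
      then show ?thesis using fS c1 by simp
    next
      case False
      then have rp: "0 < r" using r0 by simp
      define R where "R = 2 * d * r"
      have R0: "0 \<le> R" using rp d1 by (simp add: R_def)
      define P where "P X = X \<inter> cball a R" for X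
      have Pm: "P X \<in> lmeasurable" if "X \<in> S" for X
        using that SC obj unfolding P_def is_object_def
        by (auto intro!: lmeasurable_compact compact_Int_closed)
      have Plow: "\<omega> * (r / 2) ^ CARD('n) \<le> k ^ CARD('n) * measure lebesgue (P X)" if X: "X \<in> S" for X
      proof -
        have Xo: "compact X" "X \<noteq> {}" "path_connected X" using X SC obj unfolding is_object_def by auto
        obtain p where p: "p \<in> X" "p \<in> axis_cube a r" using big X by blast
        obtain x y where xy: "x \<in> X" "y \<in> X" "r \<le> norm (x - y)"
          using size_witness[OF Xo(1,2)] big X by blast
        have "norm (x - y) \<le> dist p x + dist p y"
          using dist_triangle[of x y p] dist_commute[of x p] by (simp add: dist_norm)
        then have "r / 2 \<le> dist p x \<or> r / 2 \<le> dist p y" using xy(3) by linarith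
        then obtain q where q: "q \<in> X" "r / 2 \<le> dist p q" using xy by blast
        have sph: "sphere p (r / 2) \<inter> X \<noteq> {}"
          by (rule sphere_point[OF path_connected_imp_connected[OF Xo(3)] p(1) q(1)]) (use rp q in auto)
        have "\<omega> * (r / 2) ^ CARD('n) = measure lebesgue (cball p (r / 2))"
          unfolding \<omega>_def by (rule measure_cball_cart[symmetric]) (use rp in simp)
        also have "\<dots> \<le> k ^ CARD('n) * measure lebesgue (X \<inter> cball p (r / 2))"
        proof -
          have lfX: "locally_fat k X" using lf X SC by blast
          have "0 \<le> r / 2" using rp by simp
          then show ?thesis using lfX[unfolded locally_fat_def, rule_format, OF p(1) _ sph] by blast
        qed
        also have "\<dots> \<le> k ^ CARD('n) * measure lebesgue (P X)"
        proof (rule mult_left_mono)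
          have "cball p (r / 2) \<subseteq> cball a R"
          proof
            fix z assume z: "z \<in> cball p (r / 2)"
            have "dist a p \<le> (\<Sum>i\<in>UNIV. \<bar>(a - p) $ i\<bar>)"
              unfolding dist_norm by (rule norm_le_l1_cart)
            also have "\<dots> \<le> (\<Sum>i\<in>(UNIV::'n set). r)"
            proof (rule sum_mono)
              fix i
              have "a $ i \<le> p $ i" "p $ i \<le> a $ i + r"
                using p(2) unfolding axis_cube_mem by auto
              then show "\<bar>(a - p) $ i\<bar> \<le> r" by simp
            qed
            also have "\<dots> = d * r" by (simp add: d_def)
            finally have "dist a p \<le> d * r" .
            moreover have "dist p z \<le> r / 2" using z by simp
            moreover have "r / 2 \<le> d * r" using d1 rp by simp
            ultimately have "dist a z \<le> R" using dist_triangle[of a z p] unfolding R_def by linarith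
            then show "z \<in> cball a R" by simp
          qed
          then have "X \<inter> cball p (r / 2) \<subseteq> P X" unfolding P_def by blast
          then show "measure lebesgue (X \<inter> cball p (r / 2)) \<le> measure lebesgue (P X)"
            by (rule measure_mono_fmeasurable[OF _ fmeasurableD[OF lmeasurable_compact[OF compact_Int_closed[OF Xo(1) closed_cball]]] Pm[OF X]])
          show "0 \<le> k ^ CARD('n)" using k1 by simp
        qed
        finally show ?thesis .
      qed
      have cardF: "real (card F) \<le> c" if F: "finite F" "F \<subseteq> S" for F
      proof -
        have U1: "measure lebesgue (\<Union>X\<in>F. P X) = (\<Sum>X\<in>F. measure lebesgue (P X))"
        proof (rule measure_finite_Union[OF F(1)])
          show "P ` F \<subseteq> sets lebesgue" using Pm F(2) by (auto intro: fmeasurableD)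
          show "disjoint_family_on P F"
            unfolding disjoint_family_on_def P_def
            using pd F(2) unfolding pairwise_def disjnt_def by blast
          show "emeasure lebesgue (P X) \<noteq> \<infinity>" if "X \<in> F" for X
            using Pm[of X] that F(2) by (auto simp: fmeasurable_def)
        qed
        have U2: "measure lebesgue (\<Union>X\<in>F. P X) \<le> measure lebesgue (cball a R)"
        proof (rule measure_mono_fmeasurable)
          show "(\<Union>X\<in>F. P X) \<in> sets lebesgue"
            by (intro sets.finite_UN F(1)) (use Pm F(2) in \<open>auto intro: fmeasurableD\<close>)
          show "(\<Union>X\<in>F. P X) \<subseteq> cball a R" by (auto simp: P_def)
          show "cball a R \<in> fmeasurable lebesgue" by (rule lmeasurable_cball)
        qed
        have U3: "(\<Sum>X\<in>F. \<omega> * (r / 2) ^ CARD('n)) \<le> (\<Sum>X\<in>F. k ^ CARD('n) * measure lebesgue (P X))"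
          using Plow F(2) by (intro sum_mono) auto
        have "real (card F) * (\<omega> * (r / 2) ^ CARD('n)) = (\<Sum>X\<in>F. \<omega> * (r / 2) ^ CARD('n))" by simp
        also have "\<dots> \<le> k ^ CARD('n) * (\<Sum>X\<in>F. measure lebesgue (P X))"
          using U3 by (simp add: sum_distrib_left)
        also have "\<dots> \<le> k ^ CARD('n) * measure lebesgue (cball a R)"
          using U1 U2 k1 by (intro mult_left_mono) auto
        also have "k ^ CARD('n) * measure lebesgue (cball a R) = k ^ CARD('n) * (\<omega> * R ^ CARD('n))"
          unfolding \<omega>_def measure_cball_cart[OF R0] ..
        also have "\<dots> = c * (\<omega> * (r / 2) ^ CARD('n))"
        proof -
          have e: "k * R = 4 * d * k * (r / 2)" by (simp add: R_def)
          have "k ^ CARD('n) * (\<omega> * R ^ CARD('n)) = \<omega> * (k * R) ^ CARD('n)"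
            by (simp add: power_mult_distrib)
          also have "\<dots> = \<omega> * (4 * d * k * (r / 2)) ^ CARD('n)" by (simp only: e)
          also have "\<dots> = c * (\<omega> * (r / 2) ^ CARD('n))"
            unfolding c_def by (simp only: power_mult_distrib mult.assoc mult.commute mult.left_commute)
          finally show ?thesis .
        qed
        finally show ?thesis using w0 rp by simp
      qed
      have fS: "finite S"
      proof (rule ccontr)
        assume "infinite S"
        then obtain F where F: "finite F" "F \<subseteq> S" "card F = nat \<lceil>c\<rceil> + 1"
          using infinite_arbitrarily_large by blast
        then show False using cardF[OF F(1,2)] by linarith
      qed
      then show ?thesis using cardF[OF fS] by simp
    qed
  qed
  then show ?thesis using c1 by blast
qed


theorem proposition3p9:
  fixes C :: "(real^'n) set set"
  assumes "CARD('n) \<ge> 2"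
    and "\<forall>X\<in>C. is_object X \<and> convex X"
    and "\<forall>X\<in>C. \<forall>f a. rotation f \<longrightarrow> (\<lambda>x. f x + a) ` X \<in> C"
  shows "((\<exists>k0\<ge>1. fat_collection k0 C) \<longleftrightarrow> (\<exists>k1\<ge>1. \<forall>X\<in>C. globally_fat k1 X))
       \<and> ((\<exists>k1\<ge>1. \<forall>X\<in>C. globally_fat k1 X) \<longleftrightarrow> (\<exists>k2\<ge>1. \<forall>X\<in>C. thick k2 X))
       \<and> ((\<exists>k2\<ge>1. \<forall>X\<in>C. thick k2 X) \<longleftrightarrow> (\<exists>k3\<ge>2. \<forall>X\<in>C. locally_fat k3 X))"
proof -
  have obj: "\<forall>X\<in>C. is_object X" using assms(2) by blast
  have cpt: "compact X" "X \<noteq> {}" "convex X" if "X \<in> C" for X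
    using assms(2) that unfolding is_object_def by auto
  have P12: "\<exists>k1\<ge>1. \<forall>X\<in>C. globally_fat k1 X" if H: "\<exists>k0\<ge>1. fat_collection k0 C"
    using H fat_imp_gfat[OF _ assms(2) assms(3)] by blast
  have P23: "\<exists>k2\<ge>1. \<forall>X\<in>C. thick k2 X" if H: "\<exists>k1\<ge>1. \<forall>X\<in>C. globally_fat k1 X"
  proof -
    obtain k1 where k1: "1 \<le> k1" "\<forall>X\<in>C. globally_fat k1 X" using H by blast
    have "\<forall>X\<in>C. thick k1 X"
    proof
      fix X assume "X \<in> C"
      then show "thick k1 X" using gfat_imp_thick[of k1 X] k1 cpt by auto
    qed
    then show ?thesis using k1 by blast
  qed
  have P34: "\<exists>k3\<ge>2. \<forall>X\<in>C. locally_fat k3 X" if H: "\<exists>k2\<ge>1. \<forall>X\<in>C. thick k2 X"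
  proof -
    obtain k2 where k2: "1 \<le> k2" "\<forall>X\<in>C. thick k2 X" using H by blast
    have "\<forall>X\<in>C. locally_fat (2 * k2) X"
    proof
      fix X assume "X \<in> C"
      then show "locally_fat (2 * k2) X" using thick_imp_lfat[of k2 X] k2 cpt by auto
    qed
    moreover have "2 \<le> 2 * k2" using k2 by simp
    ultimately show ?thesis by blast
  qed
  have P43: "\<exists>k2\<ge>1. \<forall>X\<in>C. thick k2 X" if H: "\<exists>k3\<ge>2. \<forall>X\<in>C. locally_fat k3 X"
  proof -
    obtain k3 where k3: "2 \<le> k3" "\<forall>X\<in>C. locally_fat k3 X" using H by blast
    have "\<forall>X\<in>C. thick k3 X"
    proof
      fix X assume "X \<in> C"
      then show "thick k3 X" using lfat_imp_thick[of k3 X] k3 cpt by auto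
    qed
    moreover have "1 \<le> k3" using k3 by simp
    ultimately show ?thesis by blast
  qed
  have P41: "\<exists>k0\<ge>1. fat_collection k0 C" if H: "\<exists>k3\<ge>2. \<forall>X\<in>C. locally_fat k3 X"
  proof -
    obtain k3 where k3: "2 \<le> k3" "\<forall>X\<in>C. locally_fat k3 X" using H by blast
    then show ?thesis using lfat_imp_fat[OF obj k3(2)] by simp
  qed
  show ?thesis using P12 P23 P34 P43 P41 by blast
qed

end
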